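(* For every $d\ge2$, every $A\in\mathcal C^{d-1}$ and every $a\in[0,\tfrac12]$, $$\max_{C\in\mathcal C^d_A}\mu_A\Big(\big\{\mathbf x\in\mathbb I^{d-1}: |r_C(\mathbf x)-\tfrac12|\ge a\big\}\Big)=\min\{1,\,2-4a\}.$$
   Context: $\mathbb I=[0,1]$, $\lambda$ Lebesgue measure. A $d$-copula $C\in\mathcal C^d$ is the distribution function on $\mathbb I^d$ of a probability measure $\mu_C$ with uniform univariate marginals; points are $(\mathbf x,y)$, $\mathbf x\in\mathbb I^{d-1}$. $C_{1:(d-1)}$ is the marginal copula of the first $d-1$ coordinates. For $A\in\mathcal C^{d-1}$, $\mathcal C^d_A=\{C\in\mathcal C^d: C_{1:(d-1)}=A\}$; for $d=2$, $\mu_A=\lambda$ and $\mathcal C^2_A=\mathcal C^2$. $K_C$ is the Markov kernel of $C$ w.r.t. the first $d-1$ coordinates: $\mu_C(B\times F)=\int_B K_C(\mathbf x,F)\,\mathrm d\mu_{C_{1:(d-1)}}(\mathbf x)$. Regression function $r_C(\mathbf x)=\int y\,K_C(\mathbf x,\mathrm dy)$. *)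

theory Defs
  imports "HOL-Probability.Probability"
begin

text \<open>Points of \<open>\<I>\<^sup>n\<close> are represented as functions \<open>nat \<Rightarrow> real\<close>, coordinates indexed by \<open>{..<n}\<close>
  (extensional, as in the product measure \<open>PiM\<close>). A copula is identified with its probability
  measure \<open>\<mu>\<^sub>C\<close> (the copula being its distribution function).\<close>

definition cube_space :: "nat \<Rightarrow> (nat \<Rightarrow> real) measure" where
  "cube_space n = PiM {..<n} (\<lambda>_. borel)"

definition is_copula :: "nat \<Rightarrow> (nat \<Rightarrow> real) measure \<Rightarrow> bool" where
  "is_copula n M \<longleftrightarrow> sets M = sets (cube_space n) \<and> prob_space M \<and>
     (\<forall>i<n. distr M borel (\<lambda>z. z i) = uniform_measure lborel {0..1})"

definition marg_first :: "nat \<Rightarrow> (nat \<Rightarrow> real) measure \<Rightarrow> (nat \<Rightarrow> real) measure" where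
  "marg_first d C = distr C (cube_space (d - 1)) (\<lambda>z. restrict z {..<d - 1})"

definition is_markov_kernel :: "nat \<Rightarrow> (nat \<Rightarrow> real) measure \<Rightarrow> ((nat \<Rightarrow> real) \<Rightarrow> real measure) \<Rightarrow> bool" where
  "is_markov_kernel d C K \<longleftrightarrow>
     K \<in> measurable (cube_space (d - 1)) (prob_algebra borel) \<and>
     (\<forall>B\<in>sets (cube_space (d - 1)). \<forall>F\<in>sets borel.
        emeasure C {z\<in>space C. restrict z {..<d - 1} \<in> B \<and> z (d - 1) \<in> F}
        = (\<integral>\<^sup>+ x\<in>B. emeasure (K x) F \<partial>(marg_first d C)))"

definition regression :: "((nat \<Rightarrow> real) \<Rightarrow> real measure) \<Rightarrow> (nat \<Rightarrow> real) \<Rightarrow> real" where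
  "regression K x = (\<integral> y. y \<partial>(K x))"

end

theory Submission
  imports Defs
begin


lemma unif_mean_nn:
  fixes l h :: real assumes "0 \<le> l" "l < h"
  shows "(\<integral>\<^sup>+ y. ennreal y \<partial>uniform_measure lborel {l..h}) = ennreal ((l + h) / 2)"
proof -
  have "(\<integral>\<^sup>+ y. ennreal y \<partial>uniform_measure lborel {l..h}) =
     (\<integral>\<^sup>+ y. ennreal y * indicator {l..h} y \<partial>lborel) / emeasure lborel {l..h}"
    by (rule nn_integral_uniform_measure) auto
  also have "(\<integral>\<^sup>+ y. ennreal y * indicator {l..h} y \<partial>lborel) = ennreal (h^2/2 - l^2/2)"
    by (rule nn_integral_FTC_Icc[where F="\<lambda>y. y^2/2"]) (use assms in \<open>auto intro!: derivative_eq_intros\<close>)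
  also have "emeasure lborel {l..h} = ennreal (h - l)" using assms by simp
  also have "ennreal (h^2/2 - l^2/2) / ennreal (h - l) = ennreal ((h^2/2 - l^2/2) / (h - l))"
    using assms by (intro divide_ennreal) auto
  also have "(h^2/2 - l^2/2) / (h - l) = (l + h) / 2"
    using assms by (simp add: field_simps power2_eq_square)
  finally show ?thesis .
qed

lemma unif_mean:
  fixes l h :: real assumes "0 \<le> l" "l < h"
  shows "(\<integral> y. y \<partial>uniform_measure lborel {l..h}) = (l + h) / 2"
proof -
  have "(\<integral> y. y \<partial>uniform_measure lborel {l..h}) = enn2real (\<integral>\<^sup>+ y. ennreal y \<partial>uniform_measure lborel {l..h})"
    by (rule integral_eq_nn_integral) (use assms in \<open>auto intro!: AE_uniform_measureI\<close>)
  then show ?thesis using unif_mean_nn[OF assms] assms by simp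
qed

lemma unif01_max1:
  fixes c :: real assumes "0 \<le> c" "c \<le> 1"
  shows "(\<integral>\<^sup>+ y. ennreal (max 0 (y - c)) \<partial>uniform_measure lborel {0..1}) = ennreal ((1-c)^2/2)"
proof -
  have "(\<integral>\<^sup>+ y. ennreal (max 0 (y - c)) \<partial>uniform_measure lborel {0..1}) =
     (\<integral>\<^sup>+ y. ennreal (max 0 (y - c)) * indicator {0..1} y \<partial>lborel) / emeasure lborel {0..1::real}"
    by (rule nn_integral_uniform_measure) auto
  also have "(\<integral>\<^sup>+ y. ennreal (max 0 (y - c)) * indicator {0..1} y \<partial>lborel) =
      (\<integral>\<^sup>+ y. ennreal (y - c) * indicator {c..1} y \<partial>lborel)"
    using assms by (intro nn_integral_cong) (auto split: split_indicator simp: max_def ennreal_neg)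
  also have "\<dots> = ennreal ((1-c)^2/2 - (c-c)^2/2)"
    by (rule nn_integral_FTC_Icc[where F="\<lambda>y. (y-c)^2/2"]) (use assms in \<open>auto intro!: derivative_eq_intros\<close>)
  finally show ?thesis by (simp add: divide_ennreal_def)
qed

lemma unif01_max2:
  fixes c :: real assumes "0 \<le> c" "c \<le> 1"
  shows "(\<integral>\<^sup>+ y. ennreal (max 0 (c - y)) \<partial>uniform_measure lborel {0..1}) = ennreal (c^2/2)"
proof -
  have "(\<integral>\<^sup>+ y. ennreal (max 0 (c - y)) \<partial>uniform_measure lborel {0..1}) =
     (\<integral>\<^sup>+ y. ennreal (max 0 (c - y)) * indicator {0..1} y \<partial>lborel) / emeasure lborel {0..1::real}"
    by (rule nn_integral_uniform_measure) auto
  also have "(\<integral>\<^sup>+ y. ennreal (max 0 (c - y)) * indicator {0..1} y \<partial>lborel) =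
      (\<integral>\<^sup>+ y. ennreal (c - y) * indicator {0..c} y \<partial>lborel)"
    using assms by (intro nn_integral_cong) (auto split: split_indicator simp: max_def ennreal_neg)
  also have "\<dots> = ennreal ((c^2/2 - (c-c)^2/2) - (c^2/2 - (c-0)^2/2))"
    by (rule nn_integral_FTC_Icc[where F="\<lambda>y. c^2/2 - (c-y)^2/2"]) (use assms in \<open>auto intro!: derivative_eq_intros simp: field_simps\<close>)
  finally show ?thesis by (simp add: divide_ennreal_def)
qed



lemma unif_bound:
  assumes P: "prob_space C" and Y[measurable]: "Y \<in> borel_measurable C"
    and D: "distr C borel Y = uniform_measure lborel {0..1}" and G[measurable]: "G \<in> sets C"
  shows "(\<integral>\<^sup>+ z. indicator G z * ennreal (Y z) \<partial>C) \<le> ennreal (measure C G - (measure C G)^2/2)"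
    and "(\<integral>\<^sup>+ z. indicator G z * ennreal (1 - Y z) \<partial>C) \<le> ennreal (measure C G - (measure C G)^2/2)"
proof -
  interpret prob_space C by (rule P)
  define p where "p = measure C G"
  have p0: "0 \<le> p" and p1: "p \<le> 1" unfolding p_def by auto
  have eG: "emeasure C G = ennreal p" unfolding p_def by (simp add: emeasure_eq_measure)
  have fin: "ennreal (1-p) * ennreal p + ennreal (p^2/2) = ennreal (p - p^2/2)"
  proof -
    have a: "ennreal (1-p) * ennreal p = ennreal ((1-p)*p)" using p0 p1 by (intro ennreal_mult[symmetric]) auto
    have b: "ennreal ((1-p)*p) + ennreal (p^2/2) = ennreal ((1-p)*p + p^2/2)"
      using p0 p1 by (intro ennreal_plus[symmetric]) auto
    have c: "(1-p)*p + p^2/2 = p - p^2/2" by (simp add: power2_eq_square algebra_simps)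
    show ?thesis using a b c by simp
  qed
  have "(\<integral>\<^sup>+ z. indicator G z * ennreal (Y z) \<partial>C) \<le>
      (\<integral>\<^sup>+ z. ennreal (1-p) * indicator G z + ennreal (max 0 (Y z - (1-p))) \<partial>C)"
  proof (intro nn_integral_mono)
    fix z
    have "ennreal (Y z) \<le> ennreal ((1-p) + max 0 (Y z - (1-p)))" by (intro ennreal_leI) auto
    also have "\<dots> = ennreal (1-p) + ennreal (max 0 (Y z - (1-p)))"
      using p1 by (intro ennreal_plus) auto
    finally show "indicator G z * ennreal (Y z) \<le> ennreal (1-p) * indicator G z + ennreal (max 0 (Y z - (1-p)))"
      by (auto split: split_indicator)
  qed
  also have "\<dots> = ennreal (1-p) * emeasure C G + (\<integral>\<^sup>+ z. ennreal (max 0 (Y z - (1-p))) \<partial>C)"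
    by (subst nn_integral_add) (auto simp: nn_integral_cmult_indicator)
  also have "(\<integral>\<^sup>+ z. ennreal (max 0 (Y z - (1-p))) \<partial>C) = (\<integral>\<^sup>+ y. ennreal (max 0 (y - (1-p))) \<partial>distr C borel Y)"
    by (subst nn_integral_distr) auto
  also have "\<dots> = ennreal (p^2/2)" unfolding D using p0 p1 by (subst unif01_max1) auto
  finally show "(\<integral>\<^sup>+ z. indicator G z * ennreal (Y z) \<partial>C) \<le> ennreal (measure C G - (measure C G)^2/2)"
    using fin eG p_def by simp
  have "(\<integral>\<^sup>+ z. indicator G z * ennreal (1 - Y z) \<partial>C) \<le>
      (\<integral>\<^sup>+ z. ennreal (1-p) * indicator G z + ennreal (max 0 (p - Y z)) \<partial>C)"
  proof (intro nn_integral_mono)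
    fix z
    have "ennreal (1 - Y z) \<le> ennreal ((1-p) + max 0 (p - Y z))" by (intro ennreal_leI) auto
    also have "\<dots> = ennreal (1-p) + ennreal (max 0 (p - Y z))"
      using p1 by (intro ennreal_plus) auto
    finally show "indicator G z * ennreal (1 - Y z) \<le> ennreal (1-p) * indicator G z + ennreal (max 0 (p - Y z))"
      by (auto split: split_indicator)
  qed
  also have "\<dots> = ennreal (1-p) * emeasure C G + (\<integral>\<^sup>+ z. ennreal (max 0 (p - Y z)) \<partial>C)"
    by (subst nn_integral_add) (auto simp: nn_integral_cmult_indicator)
  also have "(\<integral>\<^sup>+ z. ennreal (max 0 (p - Y z)) \<partial>C) = (\<integral>\<^sup>+ y. ennreal (max 0 (p - y)) \<partial>distr C borel Y)"
    by (subst nn_integral_distr) auto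
  also have "\<dots> = ennreal (p^2/2)" unfolding D using p0 p1 by (subst unif01_max2) auto
  finally show "(\<integral>\<^sup>+ z. indicator G z * ennreal (1 - Y z) \<partial>C) \<le> ennreal (measure C G - (measure C G)^2/2)"
    using fin eG p_def by simp
qed



lemma copula_basic:
  assumes C: "is_copula (Suc n) C" and M: "marg_first (Suc n) C = A"
  shows "prob_space C" "sets C = sets (cube_space (Suc n))" "sets A = sets (cube_space n)"
    "(\<lambda>z. restrict z {..<n}) \<in> C \<rightarrow>\<^sub>M cube_space n" "(\<lambda>z. z n) \<in> C \<rightarrow>\<^sub>M borel"
    "prob_space A" "A = distr C (cube_space n) (\<lambda>z. restrict z {..<n})"
    "distr C borel (\<lambda>z. z n) = uniform_measure lborel {0..1}"
proof -
  show P: "prob_space C" and S: "sets C = sets (cube_space (Suc n))" using C by (auto simp: is_copula_def)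
  show A: "A = distr C (cube_space n) (\<lambda>z. restrict z {..<n})" using M by (simp add: marg_first_def)
  then show "sets A = sets (cube_space n)" by simp
  show X: "(\<lambda>z. restrict z {..<n}) \<in> C \<rightarrow>\<^sub>M cube_space n"
    unfolding measurable_cong_sets[OF S refl] cube_space_def by (rule measurable_restrict_subset) auto
  show "(\<lambda>z. z n) \<in> C \<rightarrow>\<^sub>M borel"
    unfolding measurable_cong_sets[OF S refl] cube_space_def by (rule measurable_component_singleton) auto
  show "prob_space A" unfolding A by (rule prob_space.prob_space_distr[OF P X])
  show "distr C borel (\<lambda>z. z n) = uniform_measure lborel {0..1}" using C by (auto simp: is_copula_def)
qed

lemma kernel_basic:
  fixes K :: "(nat \<Rightarrow> real) \<Rightarrow> real measure"
  assumes K: "is_markov_kernel (Suc n) C K" and SA: "sets A = sets (cube_space n)" and M: "marg_first (Suc n) C = A"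
  shows "K \<in> A \<rightarrow>\<^sub>M prob_algebra borel" "K \<in> A \<rightarrow>\<^sub>M subprob_algebra borel"
    "\<And>B (F::real set). B \<in> sets A \<Longrightarrow> F \<in> sets borel \<Longrightarrow>
        emeasure C {z\<in>space C. restrict z {..<n} \<in> B \<and> z n \<in> F} = (\<integral>\<^sup>+ x. emeasure (K x) F * indicator B x \<partial>A)"
proof -
  show K1: "K \<in> A \<rightarrow>\<^sub>M prob_algebra borel" using K unfolding measurable_cong_sets[OF SA refl]
    by (simp add: is_markov_kernel_def)
  then show "K \<in> A \<rightarrow>\<^sub>M subprob_algebra borel" by (rule measurable_prob_algebraD)
  fix B and F :: "real set" assume "B \<in> sets A" "F \<in> sets borel"
  then show "emeasure C {z\<in>space C. restrict z {..<n} \<in> B \<and> z n \<in> F} = (\<integral>\<^sup>+ x. emeasure (K x) F * indicator B x \<partial>A)"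
    using K M SA by (simp add: is_markov_kernel_def)
qed

lemma disint:
  fixes K :: "(nat \<Rightarrow> real) \<Rightarrow> real measure"
  assumes C: "is_copula (Suc n) C" and M: "marg_first (Suc n) C = A" and K: "is_markov_kernel (Suc n) C K"
    and E[measurable]: "E \<in> sets A" and h[measurable]: "h \<in> borel_measurable borel"
  shows "(\<integral>\<^sup>+ z. indicator E (restrict z {..<n}) * h (z n) \<partial>C) = (\<integral>\<^sup>+ x. indicator E x * (\<integral>\<^sup>+ y. h y \<partial>K x) \<partial>A)"
proof -
  note cb = copula_basic[OF C M]
  note kb = kernel_basic[OF K cb(3) M]
  have X[measurable]: "(\<lambda>z. restrict z {..<n}) \<in> C \<rightarrow>\<^sub>M A"
    unfolding measurable_cong_sets[OF refl cb(3)] by (rule cb(4))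
  note Y[measurable] = cb(5)
  note Ks[measurable] = kb(2)
  define D where "D = density C (\<lambda>z. indicator E (restrict z {..<n}))"
  define A' where "A' = density A (indicator E)"
  have Ks': "K \<in> A' \<rightarrow>\<^sub>M subprob_algebra borel" unfolding A'_def
    using Ks by (simp add: measurable_cong_sets[OF sets_density refl])
  have ne: "space A' \<noteq> {}" unfolding A'_def using prob_space.not_empty[OF cb(6)] by simp
  have eq: "distr D borel (\<lambda>z. z n) = bind A' K"
  proof (rule measure_eqI)
    show "sets (distr D borel (\<lambda>z. z n)) = sets (bind A' K)"
      using sets_bind[OF sets_kernel[OF Ks'] ne] by simp
  next
    fix F assume "F \<in> sets (distr D borel (\<lambda>z. z n))"
    then have F[measurable]: "F \<in> sets borel" by simp
    have "emeasure (distr D borel (\<lambda>z. z n)) F = emeasure D ((\<lambda>z. z n) -` F \<inter> space C)"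
      unfolding D_def by (subst emeasure_distr) auto
    also have "\<dots> = (\<integral>\<^sup>+ z. indicator E (restrict z {..<n}) * indicator ((\<lambda>z. z n) -` F \<inter> space C) z \<partial>C)"
      unfolding D_def by (subst emeasure_density) auto
    also have "\<dots> = (\<integral>\<^sup>+ z. indicator {z\<in>space C. restrict z {..<n} \<in> E \<and> z n \<in> F} z \<partial>C)"
      by (intro nn_integral_cong) (auto split: split_indicator)
    also have "\<dots> = emeasure C {z\<in>space C. restrict z {..<n} \<in> E \<and> z n \<in> F}"
      by (intro nn_integral_indicator) measurable
    also have "\<dots> = (\<integral>\<^sup>+ x. emeasure (K x) F * indicator E x \<partial>A)"
      by (rule kb(3)) auto
    also have "\<dots> = (\<integral>\<^sup>+ x. emeasure (K x) F \<partial>A')"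
      unfolding A'_def by (subst nn_integral_density) (auto simp: mult.commute)
    also have "\<dots> = emeasure (bind A' K) F"
      by (rule emeasure_bind[symmetric, OF ne Ks' F])
    finally show "emeasure (distr D borel (\<lambda>z. z n)) F = emeasure (bind A' K) F" .
  qed
  have "(\<integral>\<^sup>+ z. indicator E (restrict z {..<n}) * h (z n) \<partial>C) = (\<integral>\<^sup>+ z. h (z n) \<partial>D)"
    unfolding D_def by (subst nn_integral_density) auto
  also have "\<dots> = (\<integral>\<^sup>+ y. h y \<partial>distr D borel (\<lambda>z. z n))"
    unfolding D_def by (subst nn_integral_distr) auto
  also have "\<dots> = (\<integral>\<^sup>+ x. (\<integral>\<^sup>+ y. h y \<partial>K x) \<partial>A')"
    unfolding eq by (rule nn_integral_bind[OF h Ks'])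
  also have "\<dots> = (\<integral>\<^sup>+ x. indicator E x * (\<integral>\<^sup>+ y. h y \<partial>K x) \<partial>A)"
    unfolding A'_def by (subst nn_integral_density) auto
  finally show ?thesis .
qed



lemma side_bound:
  fixes K :: "(nat \<Rightarrow> real) \<Rightarrow> real measure" and h :: "real \<Rightarrow> real"
  assumes C: "is_copula (Suc n) C" and M: "marg_first (Suc n) C = A" and K: "is_markov_kernel (Suc n) C K"
    and S[measurable]: "S \<in> sets A" and h[measurable]: "h \<in> borel_measurable borel"
    and bnd: "\<And>G. G \<in> sets C \<Longrightarrow> (\<integral>\<^sup>+ z. indicator G z * ennreal (h (z n)) \<partial>C) \<le> ennreal (measure C G - (measure C G)^2/2)"
    and c: "0 \<le> c" and Sc: "\<And>x. x \<in> S \<Longrightarrow> ennreal c \<le> (\<integral>\<^sup>+ y. ennreal (h y) \<partial>K x)"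
  shows "c * measure A S \<le> measure A S - (measure A S)^2/2"
proof -
  note cb = copula_basic[OF C M]
  interpret A: prob_space A by (rule cb(6))
  have X[measurable]: "(\<lambda>z. restrict z {..<n}) \<in> C \<rightarrow>\<^sub>M A"
    unfolding measurable_cong_sets[OF refl cb(3)] by (rule cb(4))
  note Y[measurable] = cb(5)
  define G where "G = {z\<in>space C. restrict z {..<n} \<in> S}"
  have G[measurable]: "G \<in> sets C" unfolding G_def by measurable
  have SS: "S \<in> sets (cube_space n)" using S cb(3) by simp
  have mG: "measure C G = measure A S"
  proof -
    have "measure (distr C (cube_space n) (\<lambda>z. restrict z {..<n})) S = measure C ((\<lambda>z. restrict z {..<n}) -` S \<inter> space C)"
      by (rule measure_distr[OF cb(4) SS])
    then show ?thesis using cb(7) unfolding G_def by (simp add: Int_def conj_commute)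
  qed
  define p where "p = measure A S"
  have p0: "0 \<le> p" and p1: "p \<le> 1" unfolding p_def by auto
  have "ennreal (c * p) = ennreal c * emeasure A S"
    using c p0 unfolding p_def by (simp add: A.emeasure_eq_measure ennreal_mult)
  also have "\<dots> = (\<integral>\<^sup>+ x. indicator S x * ennreal c \<partial>A)"
    by (simp add: nn_integral_cmult_indicator mult.commute)
  also have "\<dots> \<le> (\<integral>\<^sup>+ x. indicator S x * (\<integral>\<^sup>+ y. ennreal (h y) \<partial>K x) \<partial>A)"
    by (intro nn_integral_mono) (auto split: split_indicator intro: Sc)
  also have "\<dots> = (\<integral>\<^sup>+ z. indicator S (restrict z {..<n}) * ennreal (h (z n)) \<partial>C)"
    by (rule disint[OF C M K S, symmetric]) measurable
  also have "\<dots> = (\<integral>\<^sup>+ z. indicator G z * ennreal (h (z n)) \<partial>C)"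
    by (intro nn_integral_cong) (auto simp: G_def split: split_indicator)
  also have "\<dots> \<le> ennreal (p - p^2/2)" using bnd[OF G] mG p_def by simp
  finally have "ennreal (c * p) \<le> ennreal (p - p^2/2)" .
  moreover have "0 \<le> p - p^2/2" using p0 p1 by (simp add: power2_eq_square) (smt (verit) mult_left_le)
  ultimately show ?thesis unfolding p_def[symmetric] by (simp add: ennreal_le_iff)
qed



lemma upper:
  fixes K :: "(nat \<Rightarrow> real) \<Rightarrow> real measure" and a :: real
  assumes C: "is_copula (Suc n) C" and M: "marg_first (Suc n) C = A" and K: "is_markov_kernel (Suc n) C K"
    and a0: "0 \<le> a" and a1: "a \<le> 1/2"
  shows "measure A {x\<in>space A. (\<forall>i<n. x i \<in> {0..1}) \<and> \<bar>regression K x - 1/2\<bar> \<ge> a} \<le> min 1 (2 - 4 * a)"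
proof -
  note cb = copula_basic[OF C M]
  note kb = kernel_basic[OF K cb(3) M]
  interpret A: prob_space A by (rule cb(6))
  interpret C: prob_space C by (rule cb(1))
  note Ks[measurable] = kb(2)
  note Y[measurable] = cb(5)
  define g1 where "g1 x = (\<integral>\<^sup>+ y. ennreal y \<partial>K x)" for x
  define g2 where "g2 x = (\<integral>\<^sup>+ y. ennreal (1 - y) \<partial>K x)" for x
  have g1m[measurable]: "g1 \<in> borel_measurable A" unfolding g1_def[abs_def]
    by (rule measurable_compose[OF Ks nn_integral_measurable_subprob_algebra]) measurable
  have g2m[measurable]: "g2 \<in> borel_measurable A" unfolding g2_def[abs_def]
    by (rule measurable_compose[OF Ks nn_integral_measurable_subprob_algebra]) measurable
  define S where "S = {x\<in>space A. ennreal (1/2 + a) \<le> g1 x}"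
  define T where "T = {x\<in>space A. ennreal (1/2 + a) \<le> g2 x}"
  have S[measurable]: "S \<in> sets A" unfolding S_def by measurable
  have T[measurable]: "T \<in> sets A" unfolding T_def by measurable
  have fin: "p \<le> 1 - 2 * a" if "(1/2 + a) * p \<le> p - p^2/2" "0 \<le> p" for p
  proof (cases "p = 0")
    case False
    then have "p > 0" using that by simp
    have "p * (p/2 - 1/2 + a) \<le> 0" using that(1) by (simp add: power2_eq_square algebra_simps)
    then have "p/2 - 1/2 + a \<le> 0" using \<open>p > 0\<close> by (simp add: mult_le_0_iff)
    then show ?thesis by simp
  qed (use a1 in simp)
  have mS: "measure A S \<le> 1 - 2 * a"
  proof (rule fin)
    show "(1/2 + a) * measure A S \<le> measure A S - (measure A S)^2/2"
      by (rule side_bound[OF C M K S, where h="\<lambda>y. y"])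
        (use unif_bound(1)[OF cb(1) Y cb(8)] a0 in \<open>auto simp: S_def g1_def\<close>)
  qed simp
  have mT: "measure A T \<le> 1 - 2 * a"
  proof (rule fin)
    show "(1/2 + a) * measure A T \<le> measure A T - (measure A T)^2/2"
      by (rule side_bound[OF C M K T, where h="\<lambda>y. 1 - y"])
        (use unif_bound(2)[OF cb(1) Y cb(8)] a0 in \<open>auto simp: T_def g2_def\<close>)
  qed simp
  define F :: "real set" where "F = - {0..1}"
  have F[measurable]: "F \<in> sets borel" unfolding F_def by measurable
  define N0 where "N0 = {x\<in>space A. emeasure (K x) F \<noteq> 0}"
  have N0[measurable]: "N0 \<in> sets A" unfolding N0_def by measurable
  have mN0: "measure A N0 = 0"
  proof -
    have "emeasure C {z\<in>space C. restrict z {..<n} \<in> space A \<and> z n \<in> F} = emeasure C ((\<lambda>z. z n) -` F \<inter> space C)"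
      using measurable_space[OF cb(4)] cb(3) by (intro arg_cong[where f="emeasure C"]) (auto dest: sets_eq_imp_space_eq)
    also have "\<dots> = emeasure (distr C borel (\<lambda>z. z n)) F" by (rule emeasure_distr[symmetric]) auto
    also have "\<dots> = 0" unfolding cb(8) F_def by (subst emeasure_uniform_measure) auto
    finally have "(\<integral>\<^sup>+ x. emeasure (K x) F * indicator (space A) x \<partial>A) = 0"
      using kb(3)[of "space A" F] by simp
    then have "AE x in A. emeasure (K x) F * indicator (space A) x = 0"
      by (subst (asm) nn_integral_0_iff_AE) auto
    then have "AE x in A. x \<notin> N0" by eventually_elim (auto simp: N0_def)
    moreover have "{x\<in>space A. \<not> x \<notin> N0} = N0" using sets.sets_into_space[OF N0] by auto
    ultimately have "emeasure A N0 = 0" using AE_iff_measurable[OF N0, of "\<lambda>x. x \<notin> N0"] by simp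
    then show ?thesis by (simp add: A.emeasure_eq_measure)
  qed
  define R where "R = {x\<in>space A. (\<forall>i<n. x i \<in> {0..1}) \<and> \<bar>regression K x - 1/2\<bar> \<ge> a}"
  have RST: "R \<subseteq> S \<union> T \<union> N0"
  proof
    fix x assume xR: "x \<in> R"
    then have x: "x \<in> space A" unfolding R_def by auto
    show "x \<in> S \<union> T \<union> N0"
    proof (cases "x \<in> N0")
      case False
      then have KF: "emeasure (K x) F = 0" using x unfolding N0_def by auto
      have Kx: "K x \<in> space (prob_algebra borel)" using measurable_space[OF kb(1) x] .
      then interpret Kx: prob_space "K x" by (simp add: space_prob_algebra)
      have sK: "sets (K x) = sets borel" using Kx by (simp add: space_prob_algebra)
      have idm[measurable]: "(\<lambda>y::real. y) \<in> borel_measurable (K x)"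
        unfolding measurable_cong_sets[OF sK refl] by simp
      have AEK: "AE y in K x. y \<in> {0..1}"
        using KF F sK by (intro AE_I'[of F]) (auto simp: F_def null_sets_def)
      have int: "integrable (K x) (\<lambda>y. y)"
        by (rule Kx.integrable_const_bound[where B=1]) (use AEK in auto)
      define r where "r = regression K x"
      have r: "r = (\<integral> y. y \<partial>K x)" unfolding r_def regression_def ..
      have "g1 x = ennreal r" unfolding g1_def r
        by (rule nn_integral_eq_integral[OF int]) (use AEK in auto)
      moreover have "g2 x = ennreal (1 - r)" unfolding g2_def r
      proof (subst nn_integral_eq_integral)
        show "integrable (K x) (\<lambda>y. 1 - y)" using int by auto
        show "AE y in K x. 0 \<le> 1 - y" using AEK by auto
        show "ennreal (\<integral> y. 1 - y \<partial>K x) = ennreal (1 - (\<integral> y. y \<partial>K x))"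
          using int by (subst Bochner_Integration.integral_diff) (auto simp: Kx.prob_space)
      qed
      moreover have "\<bar>r - 1/2\<bar> \<ge> a" using xR unfolding R_def r_def by auto
      ultimately show ?thesis using x unfolding S_def T_def
        by (auto intro!: ennreal_leI split: abs_split)
    qed auto
  qed
  show ?thesis
  proof (cases "R \<in> sets A")
    case True
    have "measure A R \<le> measure A (S \<union> T \<union> N0)" by (rule A.finite_measure_mono[OF RST]) measurable
    also have "\<dots> \<le> measure A (S \<union> T) + measure A N0" by (rule measure_subadditive) auto
    also have "\<dots> \<le> measure A S + measure A T + measure A N0"
      using measure_subadditive[OF S T] by simp
    finally have "measure A R \<le> 2 - 4 * a" using mS mT mN0 by simp
    moreover have "measure A R \<le> 1" by simp
    ultimately show ?thesis unfolding R_def by simp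
  next
    case False
    then show ?thesis using a1 unfolding R_def[symmetric] by (simp add: measure_notin_sets)
  qed
qed



definition Jm :: "real \<Rightarrow> real \<Rightarrow> real measure" where
  "Jm p t = (if 0 \<le> t \<and> t < p then uniform_measure lborel {1-p..1}
     else if p \<le> t \<and> t < 2*p then uniform_measure lborel {0..p}
     else if p < 1/2 then uniform_measure lborel {p..1-p} else uniform_measure lborel {0..1})"

lemma unif_prob_alg:
  fixes l h :: real assumes "l < h"
  shows "uniform_measure lborel {l..h} \<in> space (prob_algebra borel)"
  using assms by (auto simp: space_prob_algebra intro!: prob_space_uniform_measure)

lemma Jm_space:
  assumes "0 \<le> p" "p \<le> 1/2"
  shows "Jm p t \<in> space (prob_algebra borel)"
  using assms unfolding Jm_def by (auto intro!: unif_prob_alg)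

lemma Jm_meas:
  assumes "0 \<le> p" "p \<le> 1/2"
  shows "Jm p \<in> borel \<rightarrow>\<^sub>M prob_algebra borel"
proof (cases "p = 0")
  case True
  then have "Jm p = (\<lambda>t. uniform_measure lborel {p..1-p})" by (auto simp: Jm_def fun_eq_iff)
  then show ?thesis using True by (simp add: unif_prob_alg)
next
  case False
  then have p: "0 < p" using assms by simp
  have c3: "(if p < 1/2 then uniform_measure lborel {p..1-p} else uniform_measure lborel {0..1::real}) \<in> space (prob_algebra borel)"
    by (auto intro!: unif_prob_alg)
  show ?thesis unfolding Jm_def[abs_def]
    by (intro measurable_If measurable_const unif_prob_alg c3) (use p in auto)
qed

lemma Jm_mean:
  assumes "0 \<le> p" "p \<le> 1/2"
  shows "(\<integral> y. y \<partial>Jm p t) = (if 0 \<le> t \<and> t < p then 1 - p/2 else if p \<le> t \<and> t < 2*p then p/2 else 1/2)"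
  using assms by (auto simp: Jm_def unif_mean)

lemma frac_times:
  fixes l h :: real and F :: "real set" assumes "l \<le> h" and F: "F \<in> sets borel"
  shows "emeasure lborel ({l..h} \<inter> F) / emeasure lborel {l..h} * ennreal (h - l) = emeasure lborel ({l..h} \<inter> F)"
proof (cases "l = h")
  case True
  have "emeasure lborel ({l..h} \<inter> F) \<le> emeasure lborel {l..h}" by (intro emeasure_mono) auto
  then show ?thesis using True by simp
next
  case False
  then have "h - l > 0" using assms by simp
  then have "ennreal (h - l) / ennreal (h - l) = 1" by (simp add: divide_ennreal)
  then show ?thesis using assms by (simp add: ennreal_divide_times)
qed

lemma mixture:
  fixes F :: "real set" assumes p: "0 \<le> p" "p \<le> 1/2" and F[measurable]: "F \<in> sets borel"
  shows "(\<integral>\<^sup>+ t. emeasure (Jm p t) F * indicator {0..1} t \<partial>lborel) = emeasure lborel ({0..1} \<inter> F)"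
proof -
  define S3 where "S3 = (if p < 1/2 then {p..1-p} else {0..1::real})"
  define e1 where "e1 = emeasure lborel ({1-p..1} \<inter> F) / emeasure lborel {1-p..1}"
  define e2 where "e2 = emeasure lborel ({0..p} \<inter> F) / emeasure lborel {0..p}"
  define e3 where "e3 = emeasure lborel (S3 \<inter> F) / emeasure lborel S3"
  have "(\<integral>\<^sup>+ t. emeasure (Jm p t) F * indicator {0..1} t \<partial>lborel) =
     (\<integral>\<^sup>+ t. (e1 * indicator {0..<p} t + e2 * indicator {p..<2*p} t) + e3 * indicator {2*p..1} t \<partial>lborel)"
  proof (intro nn_integral_cong)
    fix t :: real
    have S3m: "S3 \<in> sets lborel" unfolding S3_def by auto
    show "emeasure (Jm p t) F * indicator {0..1} t = (e1 * indicator {0..<p} t + e2 * indicator {p..<2*p} t) + e3 * indicator {2*p..1} t"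
      using p S3m unfolding Jm_def e1_def e2_def e3_def S3_def
      by (auto split: split_indicator simp: Int_commute)
  qed
  also have "\<dots> = e1 * ennreal p + e2 * ennreal p + e3 * ennreal (1 - 2*p)"
    using p by (simp add: nn_integral_add nn_integral_cmult_indicator)
  also have "e1 * ennreal p = emeasure lborel ({1-p..1} \<inter> F)"
    unfolding e1_def using frac_times[of "1-p" 1 F] p by simp
  also have "e2 * ennreal p = emeasure lborel ({0..p} \<inter> F)"
    unfolding e2_def using frac_times[of 0 p F] p by simp
  also have "e3 * ennreal (1 - 2*p) = emeasure lborel ({p..1-p} \<inter> F)"
  proof (cases "p < 1/2")
    case True
    then show ?thesis unfolding e3_def S3_def using frac_times[of p "1-p" F] by simp
  next
    case False
    then have p2: "p = 1/2" using p by simp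
    have z: "emeasure lborel ({p..1-p} \<inter> F) = 0" using frac_times[of p "1-p" F] unfolding p2 by simp
    show ?thesis using z unfolding p2 by simp
  qed
  also have "emeasure lborel ({1-p..1} \<inter> F) + emeasure lborel ({0..p} \<inter> F) + emeasure lborel ({p..1-p} \<inter> F)
      = (\<integral>\<^sup>+ t. indicator ({1-p..1} \<inter> F) t + indicator ({0..p} \<inter> F) t + indicator ({p..1-p} \<inter> F) t \<partial>lborel)"
    by (simp add: nn_integral_add)
  also have "\<dots> = (\<integral>\<^sup>+ t. indicator ({0..1} \<inter> F) t \<partial>lborel)"
  proof (intro nn_integral_cong_AE)
    have "AE t in lborel. t \<noteq> p \<and> t \<noteq> 1 - p" by (intro AE_conjI AE_lborel_singleton)
    then show "AE t in lborel. indicator ({1-p..1} \<inter> F) t + indicator ({0..p} \<inter> F) t + indicator ({p..1-p} \<inter> F) t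
        = (indicator ({0..1} \<inter> F) t :: ennreal)"
      by eventually_elim (use p in \<open>auto split: split_indicator\<close>)
  qed
  also have "\<dots> = emeasure lborel ({0..1} \<inter> F)" by simp
  finally show ?thesis .
qed



lemma space_cube: "space (cube_space n) = (\<Pi>\<^sub>E i\<in>{..<n}. UNIV)"
  by (simp add: cube_space_def space_PiM)

lemma upd_facts:
  assumes "x \<in> space (cube_space n)"
  shows "restrict (x(n:=y)) {..<n} = x" "x(n:=y) \<in> space (cube_space (Suc n))"
  using assms unfolding space_cube by (auto simp: fun_eq_iff PiE_def extensional_def)

lemma upd_meas: "(\<lambda>(x, y). x(n:=y)) \<in> cube_space n \<Otimes>\<^sub>M borel \<rightarrow>\<^sub>M cube_space (Suc n)"
proof -
  have I: "{..<Suc n} = {..<n} \<union> {n}" by auto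
  have "(\<lambda>z. (fst z)(n := snd z)) \<in> cube_space n \<Otimes>\<^sub>M borel \<rightarrow>\<^sub>M cube_space (Suc n)"
    unfolding cube_space_def
    by (rule measurable_fun_upd[OF I]) (auto intro: measurable_fst'' measurable_snd'')
  moreover have "(\<lambda>(x, y). x(n:=y)) = (\<lambda>z. (fst z)(n := snd z))" by auto
  ultimately show ?thesis by simp
qed

lemma construction_basic:
  fixes A :: "(nat \<Rightarrow> real) measure" and K :: "(nat \<Rightarrow> real) \<Rightarrow> real measure"
  assumes SA: "sets A = sets (cube_space n)" and PA: "prob_space A"
    and KA: "K \<in> cube_space n \<rightarrow>\<^sub>M prob_algebra borel"
  defines "C \<equiv> bind A (\<lambda>x. distr (K x) (cube_space (Suc n)) (\<lambda>y. x(n:=y)))"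
  shows "sets C = sets (cube_space (Suc n))" "prob_space C"
    "\<And>G. G \<in> sets (cube_space (Suc n)) \<Longrightarrow> emeasure C G = (\<integral>\<^sup>+ x. emeasure (K x) ((\<lambda>y. x(n:=y)) -` G) \<partial>A)"
proof -
  define \<Psi> where "\<Psi> x = distr (K x) (cube_space (Suc n)) (\<lambda>y. x(n:=y))" for x
  have C: "C = bind A \<Psi>" unfolding C_def \<Psi>_def ..
  have spA: "space A = space (cube_space n)" using SA by (rule sets_eq_imp_space_eq)
  have ne: "space A \<noteq> {}" using prob_space.not_empty[OF PA] .
  have KAs: "K \<in> A \<rightarrow>\<^sub>M subprob_algebra borel"
    unfolding measurable_cong_sets[OF SA refl] by (rule measurable_prob_algebraD[OF KA])
  have Kx: "prob_space (K x)" "sets (K x) = sets borel" if "x \<in> space A" for x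
    using measurable_space[OF KA, of x] that spA by (auto simp: space_prob_algebra)
  have spK: "space (K x) = UNIV" if "x \<in> space A" for x
    using sets_eq_imp_space_eq[OF Kx(2)[OF that]] by simp
  have Fm: "(\<lambda>(x, y). x(n:=y)) \<in> A \<Otimes>\<^sub>M borel \<rightarrow>\<^sub>M cube_space (Suc n)"
    unfolding measurable_cong_sets[OF sets_pair_measure_cong[OF SA refl] refl] by (rule upd_meas)
  have Fx: "(\<lambda>y. x(n:=y)) \<in> K x \<rightarrow>\<^sub>M cube_space (Suc n)" if x: "x \<in> space A" for x
  proof -
    have "(\<lambda>y. (\<lambda>(x, y). x(n:=y)) (x, y)) \<in> borel \<rightarrow>\<^sub>M cube_space (Suc n)"
      by (rule measurable_Pair2[OF Fm x])
    then show ?thesis unfolding measurable_cong_sets[OF Kx(2)[OF x] refl] by simp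
  qed
  have \<Psi>s: "\<Psi> \<in> A \<rightarrow>\<^sub>M subprob_algebra (cube_space (Suc n))"
    unfolding \<Psi>_def[abs_def] by (rule measurable_distr2[OF Fm KAs])
  have \<Psi>p: "prob_space (\<Psi> x)" if "x \<in> space A" for x
    unfolding \<Psi>_def by (rule prob_space.prob_space_distr[OF Kx(1)[OF that] Fx[OF that]])
  have \<Psi>pa: "\<Psi> \<in> cube_space n \<rightarrow>\<^sub>M prob_algebra (cube_space (Suc n))"
    using measurable_prob_algebraI[OF \<Psi>p \<Psi>s] unfolding measurable_cong_sets[OF SA refl] .
  show "sets C = sets (cube_space (Suc n))" unfolding C
    by (rule sets_bind[OF _ ne]) (simp add: \<Psi>_def)
  show "prob_space C" unfolding C
    by (rule prob_space_bind'[OF _ \<Psi>pa]) (use SA PA in \<open>simp add: space_prob_algebra\<close>)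
  fix G assume G: "G \<in> sets (cube_space (Suc n))"
  have "emeasure C G = (\<integral>\<^sup>+ x. emeasure (\<Psi> x) G \<partial>A)" unfolding C by (rule emeasure_bind[OF ne \<Psi>s G])
  also have "\<dots> = (\<integral>\<^sup>+ x. emeasure (K x) ((\<lambda>y. x(n:=y)) -` G) \<partial>A)"
  proof (intro nn_integral_cong)
    fix x assume x: "x \<in> space A"
    show "emeasure (\<Psi> x) G = emeasure (K x) ((\<lambda>y. x(n:=y)) -` G)"
      unfolding \<Psi>_def using emeasure_distr[OF Fx[OF x] G] spK[OF x] by simp
  qed
  finally show "emeasure C G = (\<integral>\<^sup>+ x. emeasure (K x) ((\<lambda>y. x(n:=y)) -` G) \<partial>A)" .
qed



lemma construction_props:
  fixes A :: "(nat \<Rightarrow> real) measure" and K :: "(nat \<Rightarrow> real) \<Rightarrow> real measure"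
  assumes SA: "sets A = sets (cube_space n)" and PA: "prob_space A"
    and KA: "K \<in> cube_space n \<rightarrow>\<^sub>M prob_algebra borel"
  defines "C \<equiv> bind A (\<lambda>x. distr (K x) (cube_space (Suc n)) (\<lambda>y. x(n:=y)))"
  shows "marg_first (Suc n) C = A" "is_markov_kernel (Suc n) C K"
    "\<And>i. i < n \<Longrightarrow> distr C borel (\<lambda>z. z i) = distr A borel (\<lambda>x. x i)"
    "\<And>F. F \<in> sets borel \<Longrightarrow> emeasure (distr C borel (\<lambda>z. z n)) F = (\<integral>\<^sup>+ x. emeasure (K x) F \<partial>A)"
proof -
  note cb = construction_basic[OF SA PA KA, folded C_def]
  have spA: "space A = space (cube_space n)" using SA by (rule sets_eq_imp_space_eq)
  have spC: "space C = space (cube_space (Suc n))" using cb(1) by (rule sets_eq_imp_space_eq)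
  have Kx: "prob_space (K x)" "sets (K x) = sets borel" if "x \<in> space A" for x
    using measurable_space[OF KA, of x] that spA by (auto simp: space_prob_algebra)
  have spK: "space (K x) = UNIV" if "x \<in> space A" for x
    using sets_eq_imp_space_eq[OF Kx(2)[OF that]] by simp
  have K1: "emeasure (K x) UNIV = 1" if "x \<in> space A" for x
    using prob_space.emeasure_space_1[OF Kx(1)[OF that]] spK[OF that] by simp
  have X[measurable]: "(\<lambda>z. restrict z {..<n}) \<in> C \<rightarrow>\<^sub>M A"
    unfolding measurable_cong_sets[OF cb(1) SA] cube_space_def by (rule measurable_restrict_subset) auto
  have Xc: "(\<lambda>z. restrict z {..<n}) \<in> C \<rightarrow>\<^sub>M cube_space n"
    unfolding measurable_cong_sets[OF cb(1) refl] cube_space_def by (rule measurable_restrict_subset) auto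
  have Y[measurable]: "(\<lambda>z. z n) \<in> C \<rightarrow>\<^sub>M borel"
    unfolding measurable_cong_sets[OF cb(1) refl] cube_space_def by (rule measurable_component_singleton) auto
  have emC: "emeasure C G = (\<integral>\<^sup>+ x. emeasure (K x) ((\<lambda>y. x(n:=y)) -` G) \<partial>A)" if "G \<in> sets C" for G
    using cb(3) that cb(1) by simp
  show marg: "marg_first (Suc n) C = A"
  proof (unfold marg_first_def, simp, rule measure_eqI)
    show "sets (distr C (cube_space n) (\<lambda>z. restrict z {..<n})) = sets A" using SA by simp
    fix B assume "B \<in> sets (distr C (cube_space n) (\<lambda>z. restrict z {..<n}))"
    then have B[measurable]: "B \<in> sets A" using SA by simp
    have "emeasure (distr C (cube_space n) (\<lambda>z. restrict z {..<n})) B = emeasure C ((\<lambda>z. restrict z {..<n}) -` B \<inter> space C)"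
      by (rule emeasure_distr[OF Xc]) (use B SA in simp)
    also have "\<dots> = (\<integral>\<^sup>+ x. emeasure (K x) ((\<lambda>y. x(n:=y)) -` ((\<lambda>z. restrict z {..<n}) -` B \<inter> space C)) \<partial>A)"
      by (rule emC) measurable
    also have "\<dots> = (\<integral>\<^sup>+ x. indicator B x \<partial>A)"
    proof (intro nn_integral_cong)
      fix x assume x: "x \<in> space A"
      then have x': "x \<in> space (cube_space n)" using spA by simp
      have "(\<lambda>y. x(n:=y)) -` ((\<lambda>z. restrict z {..<n}) -` B \<inter> space C) = (if x \<in> B then UNIV else {})"
        using upd_facts[OF x'] spC by auto
      then show "emeasure (K x) ((\<lambda>y. x(n:=y)) -` ((\<lambda>z. restrict z {..<n}) -` B \<inter> space C)) = indicator B x"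
        using K1[OF x] by simp
    qed
    also have "\<dots> = emeasure A B" using B by simp
    finally show "emeasure (distr C (cube_space n) (\<lambda>z. restrict z {..<n})) B = emeasure A B" .
  qed
  show "is_markov_kernel (Suc n) C K"
  proof (unfold is_markov_kernel_def, simp add: marg, intro conjI ballI)
    show "K \<in> cube_space n \<rightarrow>\<^sub>M prob_algebra borel" by (rule KA)
    fix B and F :: "real set" assume B: "B \<in> sets (cube_space n)" and F[measurable]: "F \<in> sets borel"
    have B'[measurable]: "B \<in> sets A" using B SA by simp
    have "emeasure C {z\<in>space C. restrict z {..<n} \<in> B \<and> z n \<in> F}
        = (\<integral>\<^sup>+ x. emeasure (K x) ((\<lambda>y. x(n:=y)) -` {z\<in>space C. restrict z {..<n} \<in> B \<and> z n \<in> F}) \<partial>A)"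
      by (rule emC) measurable
    also have "\<dots> = (\<integral>\<^sup>+ x. emeasure (K x) F * indicator B x \<partial>A)"
    proof (intro nn_integral_cong)
      fix x assume x: "x \<in> space A"
      then have x': "x \<in> space (cube_space n)" using spA by simp
      have "(\<lambda>y. x(n:=y)) -` {z\<in>space C. restrict z {..<n} \<in> B \<and> z n \<in> F} = (if x \<in> B then F else {})"
        using upd_facts[OF x'] spC by auto
      then show "emeasure (K x) ((\<lambda>y. x(n:=y)) -` {z\<in>space C. restrict z {..<n} \<in> B \<and> z n \<in> F}) = emeasure (K x) F * indicator B x"
        by (simp split: split_indicator)
    qed
    finally show "emeasure C {z\<in>space C. restrict z {..<n} \<in> B \<and> z n \<in> F} = (\<integral>\<^sup>+ x\<in>B. emeasure (K x) F \<partial>A)" .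
  qed
  show "distr C borel (\<lambda>z. z i) = distr A borel (\<lambda>x. x i)" if i: "i < n" for i
  proof -
    have Xi: "(\<lambda>x. x i) \<in> cube_space n \<rightarrow>\<^sub>M borel"
      unfolding cube_space_def by (rule measurable_component_singleton) (use i in auto)
    have "distr A borel (\<lambda>x. x i) = distr (distr C (cube_space n) (\<lambda>z. restrict z {..<n})) borel (\<lambda>x. x i)"
      using marg by (simp add: marg_first_def)
    also have "\<dots> = distr C borel ((\<lambda>x. x i) \<circ> (\<lambda>z. restrict z {..<n}))" by (rule distr_distr[OF Xi Xc])
    also have "\<dots> = distr C borel (\<lambda>z. z i)" by (rule distr_cong) (use i in auto)
    finally show ?thesis ..
  qed
  fix F :: "real set" assume F[measurable]: "F \<in> sets borel"
  have "emeasure (distr C borel (\<lambda>z. z n)) F = emeasure C ((\<lambda>z. z n) -` F \<inter> space C)"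
    by (rule emeasure_distr[OF Y F])
  also have "\<dots> = (\<integral>\<^sup>+ x. emeasure (K x) ((\<lambda>y. x(n:=y)) -` ((\<lambda>z. z n) -` F \<inter> space C)) \<partial>A)"
    by (rule emC) measurable
  also have "\<dots> = (\<integral>\<^sup>+ x. emeasure (K x) F \<partial>A)"
  proof (intro nn_integral_cong)
    fix x assume x: "x \<in> space A"
    then have x': "x \<in> space (cube_space n)" using spA by simp
    have "(\<lambda>y. x(n:=y)) -` ((\<lambda>z. z n) -` F \<inter> space C) = F"
      using upd_facts[OF x'] spC by auto
    then show "emeasure (K x) ((\<lambda>y. x(n:=y)) -` ((\<lambda>z. z n) -` F \<inter> space C)) = emeasure (K x) F" by simp
  qed
  finally show "emeasure (distr C borel (\<lambda>z. z n)) F = (\<integral>\<^sup>+ x. emeasure (K x) F \<partial>A)" .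
qed



lemma construction:
  fixes A :: "(nat \<Rightarrow> real) measure" and a :: real
  assumes n: "0 < n" and Acop: "is_copula n A" and a0: "0 \<le> a" and a1: "a \<le> 1/2"
  shows "\<exists>C K. is_copula (Suc n) C \<and> marg_first (Suc n) C = A \<and> is_markov_kernel (Suc n) C K \<and>
     measure A {x\<in>space A. (\<forall>i<n. x i \<in> {0..1}) \<and> \<bar>regression K x - 1/2\<bar> \<ge> a} = min 1 (2 - 4*a)"
proof -
  define p where "p = min (1/2) (1 - 2*a)"
  have p0: "0 \<le> p" and p1: "p \<le> 1/2" using a1 unfolding p_def by (auto simp: min_def)
  have SA: "sets A = sets (cube_space n)" and PA: "prob_space A"
    and unifA: "\<And>i. i < n \<Longrightarrow> distr A borel (\<lambda>x. x i) = uniform_measure lborel {0..1}"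
    using Acop by (auto simp: is_copula_def)
  interpret A: prob_space A by (rule PA)
  have spA: "space A = space (cube_space n)" using SA by (rule sets_eq_imp_space_eq)
  define K where "K x = Jm p (x 0)" for x :: "nat \<Rightarrow> real"
  have X0: "(\<lambda>x. x 0) \<in> cube_space n \<rightarrow>\<^sub>M borel"
    unfolding cube_space_def by (rule measurable_component_singleton) (use n in auto)
  have X0A[measurable]: "(\<lambda>x. x 0) \<in> A \<rightarrow>\<^sub>M borel"
    unfolding measurable_cong_sets[OF SA refl] by (rule X0)
  have XiA[measurable]: "(\<lambda>x. x i) \<in> A \<rightarrow>\<^sub>M borel" if "i < n" for i
    unfolding measurable_cong_sets[OF SA refl] cube_space_def by (rule measurable_component_singleton) (use that in auto)
  have KA: "K \<in> cube_space n \<rightarrow>\<^sub>M prob_algebra borel"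
    unfolding K_def[abs_def] by (rule measurable_compose[OF X0 Jm_meas[OF p0 p1]])
  define C where "C = bind A (\<lambda>x. distr (K x) (cube_space (Suc n)) (\<lambda>y. x(n:=y)))"
  note cb = construction_basic[OF SA PA KA, folded C_def]
  note props = construction_props[OF SA PA KA, folded C_def]
  have cop: "is_copula (Suc n) C"
    unfolding is_copula_def
  proof (intro conjI allI impI)
    show "sets C = sets (cube_space (Suc n))" by (rule cb(1))
    show "prob_space C" by (rule cb(2))
    fix i assume i: "i < Suc n"
    show "distr C borel (\<lambda>z. z i) = uniform_measure lborel {0..1}"
    proof (cases "i < n")
      case True
      then show ?thesis using props(3) unifA by simp
    next
      case False
      then have i: "i = n" using i by simp
      show ?thesis unfolding i
      proof (rule measure_eqI)
        show "sets (distr C borel (\<lambda>z. z n)) = sets (uniform_measure lborel {0..1::real})" by simp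
        fix F assume "F \<in> sets (distr C borel (\<lambda>z. z n))"
        then have F[measurable]: "F \<in> sets borel" by simp
        have Jmm[measurable]: "(\<lambda>t. emeasure (Jm p t) F) \<in> borel_measurable borel"
          by (rule measurable_emeasure_kernel[OF measurable_prob_algebraD[OF Jm_meas[OF p0 p1]] F])
        have "emeasure (distr C borel (\<lambda>z. z n)) F = (\<integral>\<^sup>+ x. emeasure (Jm p (x 0)) F \<partial>A)"
          using props(4)[OF F] by (simp add: K_def)
        also have "\<dots> = (\<integral>\<^sup>+ t. emeasure (Jm p t) F \<partial>distr A borel (\<lambda>x. x 0))"
          by (subst nn_integral_distr) auto
        also have "\<dots> = (\<integral>\<^sup>+ t. emeasure (Jm p t) F \<partial>uniform_measure lborel {0..1})"
          using unifA[OF n] by simp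
        also have "\<dots> = (\<integral>\<^sup>+ t. emeasure (Jm p t) F * indicator {0..1} t \<partial>lborel) / emeasure lborel {0..1::real}"
          by (rule nn_integral_uniform_measure) auto
        also have "\<dots> = emeasure lborel ({0..1} \<inter> F)" using mixture[OF p0 p1 F] by (simp add: divide_ennreal_def)
        also have "\<dots> = emeasure (uniform_measure lborel {0..1}) F"
          by (subst emeasure_uniform_measure) (auto simp: divide_ennreal_def)
        finally show "emeasure (distr C borel (\<lambda>z. z n)) F = emeasure (uniform_measure lborel {0..1}) F" .
      qed
    qed
  qed
  define mt where "mt t = (if 0 \<le> t \<and> t < p then 1 - p/2 else if p \<le> t \<and> t < 2*p then p/2 else 1/2)" for t :: real
  have reg: "regression K x = mt (x 0)" for x
    unfolding regression_def K_def mt_def using Jm_mean[OF p0 p1] by simp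
  have AEall: "AE x in A. \<forall>i\<in>{..<n}. x i \<in> {0..1}"
  proof (rule AE_finite_allI)
    fix i assume "i \<in> {..<n}"
    then have i: "i < n" by simp
    have "AE y in distr A borel (\<lambda>x. x i). y \<in> {0..1}"
      unfolding unifA[OF i] by (rule AE_uniform_measureI) auto
    then show "AE x in A. x i \<in> {0..1}"
      by (subst (asm) AE_distr_iff) (use XiA[OF i] in auto)
  qed simp
  define R where "R = {x\<in>space A. (\<forall>i<n. x i \<in> {0..1}) \<and> \<bar>regression K x - 1/2\<bar> \<ge> a}"
  have mR: "measure A R = min 1 (2 - 4*a)"
  proof (cases "a = 0")
    case True
    have "R = {x\<in>space A. \<forall>i<n. x i \<in> {0..1}}" unfolding R_def True by auto
    then have "measure A R = measure A (space A)"
      by (intro measure_eq_AE) (use AEall in auto)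
    then show ?thesis using True A.prob_space by simp
  next
    case False
    then have ap: "0 < a" using a0 by simp
    have W: "\<bar>mt t - 1/2\<bar> \<ge> a \<longleftrightarrow> t \<in> {0..<2*p}" for t
      using ap a1 p0 unfolding mt_def p_def by (auto simp: abs_if min_def split: if_splits) (auto simp: field_simps)
    have "R = {x\<in>space A. (\<forall>i<n. x i \<in> {0..1}) \<and> x 0 \<in> {0..<2*p}}"
      unfolding R_def reg W ..
    then have "measure A R = measure A {x\<in>space A. x 0 \<in> {0..<2*p}}"
      by (intro measure_eq_AE) (use AEall in auto)
    also have "\<dots> = measure (distr A borel (\<lambda>x. x 0)) {0..<2*p}"
      by (subst measure_distr) (auto simp: vimage_def Int_def conj_commute)
    also have "\<dots> = measure lborel ({0..1} \<inter> {0..<2*p}) / measure lborel {0..1::real}"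
      unfolding unifA[OF n] by (subst measure_uniform_measure) auto
    also have "{0..1} \<inter> {0..<2*p} = {0..<2*p}" using p1 by auto
    finally show ?thesis using p0 unfolding p_def by (auto simp: min_def)
  qed
  show ?thesis
    by (intro exI[of _ C] exI[of _ K] conjI cop props(1) props(2)) (use mR in \<open>simp add: R_def\<close>)
qed


theorem corollary14:
  fixes d :: nat and A :: "(nat \<Rightarrow> real) measure" and a :: real
  assumes "d \<ge> 2" and "is_copula (d - 1) A" and "0 \<le> a" and "a \<le> 1/2"
  shows "(\<forall>C K. is_copula d C \<and> marg_first d C = A \<and> is_markov_kernel d C K \<longrightarrow>
            measure A {x\<in>space A. (\<forall>i<d - 1. x i \<in> {0..1}) \<and> \<bar>regression K x - 1/2\<bar> \<ge> a}
              \<le> min 1 (2 - 4 * a))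
       \<and> (\<exists>C K. is_copula d C \<and> marg_first d C = A \<and> is_markov_kernel d C K \<and>
            measure A {x\<in>space A. (\<forall>i<d - 1. x i \<in> {0..1}) \<and> \<bar>regression K x - 1/2\<bar> \<ge> a}
              = min 1 (2 - 4 * a))"
proof -
  obtain n where d: "d = Suc n" and n: "0 < n" using assms(1) by (cases d) auto
  have A: "is_copula n A" using assms(2) d by simp
  show ?thesis unfolding d diff_Suc_1
  proof (intro conjI allI impI)
    fix C K assume H: "is_copula (Suc n) C \<and> marg_first (Suc n) C = A \<and> is_markov_kernel (Suc n) C K"
    then show "measure A {x\<in>space A. (\<forall>i<n. x i \<in> {0..1}) \<and> \<bar>regression K x - 1/2\<bar> \<ge> a} \<le> min 1 (2 - 4 * a)"
      using upper[of n C A K a] assms(3,4) by blast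
  next
    show "\<exists>C K. is_copula (Suc n) C \<and> marg_first (Suc n) C = A \<and> is_markov_kernel (Suc n) C K \<and>
            measure A {x\<in>space A. (\<forall>i<n. x i \<in> {0..1}) \<and> \<bar>regression K x - 1/2\<bar> \<ge> a} = min 1 (2 - 4 * a)"
      by (rule construction[OF n A assms(3,4)])
  qed
qed

end
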